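(* For any $t\in[T]$ and $k,n,m\in[N]$, $$\Pr(x_o=n,\;x_t=m\mid x_{T+1}=k)=q^{(k)}_tP_{n,m}\mu_m+(1-q^{(k)}_t)\mu_n\mu_m.$$
   Context: Let $N,T$ be positive integers. Let $\mathbf{P}\in\mathbb{R}^{N\times N}$ have nonnegative entries with columns summing to $1$, and let $\boldsymbol\mu\in\mathbb{R}^N$ be a probability vector with $\mathbf{P}\boldsymbol\mu=\boldsymbol\mu$. Let $\mathbf{q}^{(1)},\dots,\mathbf{q}^{(N)}$ be probability vectors in $\mathbb{R}^T$. Random variables: $x_1,\dots,x_{T+1}$ i.i.d. with law $\boldsymbol\mu$ on $[N]$, and $x_o\in[N]$ with $\Pr(x_o=n\mid x_{T+1}=k,x_1,\dots,x_T)=\sum_{s=1}^Tq^{(k)}_sP_{n,x_s}$. *)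

theory Defs
  imports Main "HOL-Library.FuncSet" Complex_Main
begin

text \<open>States are indexed by [N] = {1..N}, positions by {1..T+1}.
  A realisation of (x_1,...,x_{T+1}) is a function x in PiE {1..T+1} (\<lambda>_. {1..N}).
  mu n = mu_n, P n m = P_{n,m}, q k s = q^{(k)}_s.
  The joint probability of (x_1,...,x_{T+1}) = x and x_o = n is
  prod_{s=1}^{T+1} mu(x_s) * sum_{s=1}^T q^{(x_{T+1})}_s P_{n,x_s}.\<close>

definition joint_weight ::
  "nat \<Rightarrow> (nat \<Rightarrow> real) \<Rightarrow> (nat \<Rightarrow> nat \<Rightarrow> real) \<Rightarrow> (nat \<Rightarrow> nat \<Rightarrow> real)
   \<Rightarrow> (nat \<Rightarrow> nat) \<Rightarrow> nat \<Rightarrow> real" where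
  "joint_weight T mu P q x n =
     (\<Prod>s\<in>{1..Suc T}. mu (x s)) * (\<Sum>s\<in>{1..T}. q (x (Suc T)) s * P n (x s))"

definition model_prob ::
  "nat \<Rightarrow> nat \<Rightarrow> (nat \<Rightarrow> real) \<Rightarrow> (nat \<Rightarrow> nat \<Rightarrow> real) \<Rightarrow> (nat \<Rightarrow> nat \<Rightarrow> real)
   \<Rightarrow> ((nat \<Rightarrow> nat) \<Rightarrow> nat \<Rightarrow> bool) \<Rightarrow> real" where
  "model_prob N T mu P q E =
     (\<Sum>x\<in>PiE {1..Suc T} (\<lambda>_. {1..N}). \<Sum>n\<in>{1..N}.
        if E x n then joint_weight T mu P q x n else 0)"

definition cond_prob ::
  "nat \<Rightarrow> nat \<Rightarrow> (nat \<Rightarrow> real) \<Rightarrow> (nat \<Rightarrow> nat \<Rightarrow> real) \<Rightarrow> (nat \<Rightarrow> nat \<Rightarrow> real)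
   \<Rightarrow> ((nat \<Rightarrow> nat) \<Rightarrow> nat \<Rightarrow> bool) \<Rightarrow> ((nat \<Rightarrow> nat) \<Rightarrow> nat \<Rightarrow> bool) \<Rightarrow> real" where
  "cond_prob N T mu P q E F =
     model_prob N T mu P q (\<lambda>x n. E x n \<and> F x n) / model_prob N T mu P q F"

end

theory Submission
  imports Defs
begin

lemma sum_PiE_prod:
  fixes g :: "nat \<Rightarrow> nat \<Rightarrow> real"
  assumes "finite I" "finite A"
  shows "(\<Sum>x\<in>PiE I (\<lambda>_. A). \<Prod>j\<in>I. g j (x j)) = (\<Prod>j\<in>I. \<Sum>a\<in>A. g j a)"
  using prod_sum_PiE[of I "\<lambda>_. A" g] assms by simp

lemma sum_mult_delta:
  fixes f :: "nat \<Rightarrow> real"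
  assumes "finite A"
  shows "(\<Sum>a\<in>A. f a * (if a = c then 1 else 0)) = (if c \<in> A then f c else 0)"
  using assms by (simp add: if_distrib sum.delta cong: if_cong)

lemma prod_delta1:
  fixes h :: "nat \<Rightarrow> real"
  assumes "finite I" "c \<in> I"
  shows "(\<Prod>j\<in>I. if j = c then h j else 1) = h c"
  using assms by (simp add: prod.delta)

theorem lemmaB1:
  fixes N T :: nat and mu :: "nat \<Rightarrow> real" and P q :: "nat \<Rightarrow> nat \<Rightarrow> real"
    and t k n m :: nat
  assumes "N \<ge> 1" and "T \<ge> 1"
    and P_nonneg: "\<And>i j. i \<in> {1..N} \<Longrightarrow> j \<in> {1..N} \<Longrightarrow> P i j \<ge> 0"
    and P_col: "\<And>j. j \<in> {1..N} \<Longrightarrow> (\<Sum>i\<in>{1..N}. P i j) = 1"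
    and mu_nonneg: "\<And>i. i \<in> {1..N} \<Longrightarrow> mu i \<ge> 0"
    and mu_sum: "(\<Sum>i\<in>{1..N}. mu i) = 1"
    and stationary: "\<And>i. i \<in> {1..N} \<Longrightarrow> (\<Sum>j\<in>{1..N}. P i j * mu j) = mu i"
    and q_nonneg: "\<And>j s. j \<in> {1..N} \<Longrightarrow> s \<in> {1..T} \<Longrightarrow> q j s \<ge> 0"
    and q_sum: "\<And>j. j \<in> {1..N} \<Longrightarrow> (\<Sum>s\<in>{1..T}. q j s) = 1"
    and t: "t \<in> {1..T}" and k: "k \<in> {1..N}" and n: "n \<in> {1..N}" and m: "m \<in> {1..N}"
    and mu_k_pos: "mu k > 0"
  shows "cond_prob N T mu P q (\<lambda>x o'. o' = n \<and> x t = m) (\<lambda>x o'. x (Suc T) = k)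
           = q k t * P n m * mu m + (1 - q k t) * mu n * mu m"
proof -
  define I where "I = {1..Suc T}"
  define A where "A = {1..N}"
  have fI: "finite I" and fA: "finite A" by (simp_all add: I_def A_def)
  have TI: "Suc T \<in> I" and tI: "t \<in> I" using t by (auto simp: I_def)
  have tT: "t \<noteq> Suc T" using t by auto
  define g where "g s j a = mu a * (if j = Suc T then (if a = k then 1 else 0) else 1)
       * (if j = t then (if a = m then 1 else 0) else 1) * (if j = s then P n a else (1::real))"
    for s j a
  define h where "h j a = mu a * (if j = Suc T then (if a = k then 1 else 0) else (1::real))" for j a
  have den_pt: "(\<Sum>n'\<in>A. if x (Suc T) = k then joint_weight T mu P q x n' else 0)
      = (\<Prod>j\<in>I. h j (x j))" if x: "x \<in> PiE I (\<lambda>_. A)" for x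
  proof -
    have xs: "\<And>s. s \<in> {1..T} \<Longrightarrow> x s \<in> A" using x by (auto simp: I_def PiE_iff)
    have hprod: "(\<Prod>j\<in>I. h j (x j)) = (\<Prod>j\<in>I. mu (x j)) * (if x (Suc T) = k then 1 else 0)"
      unfolding h_def prod.distrib using fI TI
      by (simp add: prod.delta[OF fI, where b = "\<lambda>j. if x j = k then 1 else 0"] if_distrib cong: if_cong)
    show ?thesis
    proof (cases "x (Suc T) = k")
      case True
      have "(\<Sum>n'\<in>A. joint_weight T mu P q x n')
         = (\<Prod>j\<in>I. mu (x j)) * (\<Sum>s\<in>{1..T}. q k s * (\<Sum>n'\<in>A. P n' (x s)))"
        unfolding joint_weight_def I_def using True
        by (simp add: sum_distrib_left sum_distrib_right sum.swap[of _ A] mult.assoc)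
      also have "\<dots> = (\<Prod>j\<in>I. mu (x j))"
        using xs q_sum[OF k] P_col by (simp add: A_def)
      finally show ?thesis using True hprod by simp
    qed (simp add: hprod)
  qed
  have den: "model_prob N T mu P q (\<lambda>x o'. x (Suc T) = k) = mu k"
  proof -
    have "model_prob N T mu P q (\<lambda>x o'. x (Suc T) = k) = (\<Sum>x\<in>PiE I (\<lambda>_. A). \<Prod>j\<in>I. h j (x j))"
      unfolding model_prob_def I_def[symmetric] A_def[symmetric]
      by (rule sum.cong) (simp_all add: den_pt)
    also have "\<dots> = (\<Prod>j\<in>I. \<Sum>a\<in>A. h j a)" by (rule sum_PiE_prod[OF fI fA])
    also have "\<dots> = (\<Prod>j\<in>I. if j = Suc T then mu k else 1)"
      using k mu_sum by (intro prod.cong) (auto simp: h_def A_def sum_mult_delta)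
    also have "\<dots> = mu k" using prod_delta1[OF fI TI] by simp
    finally show ?thesis .
  qed
  have num_pt: "(\<Sum>n'\<in>A. if n' = n \<and> x t = m \<and> x (Suc T) = k then joint_weight T mu P q x n' else 0)
      = (\<Sum>s\<in>{1..T}. q k s * (\<Prod>j\<in>I. g s j (x j)))" if x: "x \<in> PiE I (\<lambda>_. A)" for x
  proof -
    have nA: "n \<in> A" using n by (simp add: A_def)
    have L: "(\<Sum>n'\<in>A. if n' = n \<and> x t = m \<and> x (Suc T) = k then joint_weight T mu P q x n' else 0)
       = (if x t = m \<and> x (Suc T) = k then joint_weight T mu P q x n else 0)"
      using nA fA by (cases "x t = m \<and> x (Suc T) = k") (auto simp: sum.delta intro!: sum.neutral)
    have gprod: "(\<Prod>j\<in>I. g s j (x j)) = (\<Prod>j\<in>I. mu (x j)) * (if x (Suc T) = k then 1 else 0)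
       * (if x t = m then 1 else 0) * P n (x s)" if s: "s \<in> {1..T}" for s
    proof -
      have sI: "s \<in> I" using s by (auto simp: I_def)
      have "(\<Prod>j\<in>I. g s j (x j)) = (\<Prod>j\<in>I. mu (x j)) *
         (\<Prod>j\<in>I. if j = Suc T then (if x j = k then 1 else 0) else 1) *
         (\<Prod>j\<in>I. if j = t then (if x j = m then 1 else 0) else 1) *
         (\<Prod>j\<in>I. if j = s then P n (x j) else 1)"
        unfolding g_def prod.distrib ..
      also have "\<dots> = (\<Prod>j\<in>I. mu (x j)) * (if x (Suc T) = k then 1 else 0)
       * (if x t = m then 1 else 0) * P n (x s)"
        using prod_delta1[OF fI TI, of "\<lambda>j. if x j = k then 1 else 0"]
          prod_delta1[OF fI tI, of "\<lambda>j. if x j = m then 1 else 0"]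
          prod_delta1[OF fI sI, of "\<lambda>j. P n (x j)"] by simp
      finally show ?thesis .
    qed
    show ?thesis
    proof (cases "x t = m \<and> x (Suc T) = k")
      case True
      have "joint_weight T mu P q x n = (\<Sum>s\<in>{1..T}. q k s * ((\<Prod>j\<in>I. mu (x j)) * P n (x s)))"
        unfolding joint_weight_def I_def using True
        by (simp add: sum_distrib_left mult.assoc mult.left_commute)
      also have "\<dots> = (\<Sum>s\<in>{1..T}. q k s * (\<Prod>j\<in>I. g s j (x j)))"
        using True by (intro sum.cong) (simp_all add: gprod)
      finally show ?thesis using L True by simp
    next
      case False
      then show ?thesis using L by (auto simp: gprod intro!: sum.neutral)
    qed
  qed
  have gsum: "(\<Sum>a\<in>A. g s j a) = (if j = Suc T then mu k else 1) * (if j = t then mu m else 1)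
      * (if j = s then (if s = t then P n m else mu n) else 1)" if s: "s \<in> {1..T}" and j: "j \<in> I" for s j
  proof -
    have sT: "s \<noteq> Suc T" using s by auto
    have kA: "k \<in> A" and mA: "m \<in> A" using k m by (auto simp: A_def)
    show ?thesis
    proof (cases "j = Suc T")
      case True
      then show ?thesis using sT tT kA fA by (simp add: g_def sum_mult_delta)
    next
      case F1: False
      show ?thesis
      proof (cases "j = t")
        case True
        show ?thesis
        proof (cases "s = t")
          case True
          have "(\<Sum>a\<in>A. g s j a) = (\<Sum>a\<in>A. if a = m then mu a * P n a else 0)"
            using \<open>j = t\<close> True F1 by (intro sum.cong) (auto simp: g_def)
          then show ?thesis using mA fA \<open>j = t\<close> True F1 by (simp add: sum.delta)
        next
          case False
          have "(\<Sum>a\<in>A. g s j a) = (\<Sum>a\<in>A. if a = m then mu a else 0)"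
            using \<open>j = t\<close> False F1 by (intro sum.cong) (auto simp: g_def)
          then show ?thesis using mA fA \<open>j = t\<close> False F1 by (simp add: sum.delta)
        qed
      next
        case F2: False
        show ?thesis
        proof (cases "j = s")
          case True
          have "(\<Sum>a\<in>A. mu a * P n a) = mu n" using stationary[OF n]
            by (simp add: A_def mult.commute)
          then show ?thesis using True F1 F2 by (simp add: g_def)
        next
          case False
          then show ?thesis using F1 F2 mu_sum by (simp add: g_def A_def)
        qed
      qed
    qed
  qed
  have num: "model_prob N T mu P q (\<lambda>x o'. (o' = n \<and> x t = m) \<and> x (Suc T) = k)
      = mu k * mu m * (q k t * P n m + (1 - q k t) * mu n)"
  proof -
    have "model_prob N T mu P q (\<lambda>x o'. (o' = n \<and> x t = m) \<and> x (Suc T) = k)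
        = (\<Sum>x\<in>PiE I (\<lambda>_. A). \<Sum>s\<in>{1..T}. q k s * (\<Prod>j\<in>I. g s j (x j)))"
      unfolding model_prob_def I_def[symmetric] A_def[symmetric]
      by (rule sum.cong) (simp_all add: num_pt)
    also have "\<dots> = (\<Sum>s\<in>{1..T}. q k s * (\<Sum>x\<in>PiE I (\<lambda>_. A). \<Prod>j\<in>I. g s j (x j)))"
      by (simp add: sum.swap[of _ "PiE I (\<lambda>_. A)"] sum_distrib_left)
    also have "\<dots> = (\<Sum>s\<in>{1..T}. q k s * (\<Prod>j\<in>I. \<Sum>a\<in>A. g s j a))"
      by (simp add: sum_PiE_prod[OF fI fA])
    also have "\<dots> = (\<Sum>s\<in>{1..T}. q k s * (mu k * mu m * (if s = t then P n m else mu n)))"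
    proof (rule sum.cong[OF refl])
      fix s assume s: "s \<in> {1..T}"
      have sI: "s \<in> I" using s by (auto simp: I_def)
      have "(\<Prod>j\<in>I. \<Sum>a\<in>A. g s j a) = (\<Prod>j\<in>I. (if j = Suc T then mu k else 1) * (if j = t then mu m else 1)
      * (if j = s then (if s = t then P n m else mu n) else 1))"
        using s by (intro prod.cong) (simp_all add: gsum)
      also have "\<dots> = mu k * mu m * (if s = t then P n m else mu n)"
        unfolding prod.distrib
        using prod_delta1[OF fI TI, of "\<lambda>j. mu k"] prod_delta1[OF fI tI, of "\<lambda>j. mu m"]
          prod_delta1[OF fI sI, of "\<lambda>j. if s = t then P n m else mu n"] by simp
      finally show "q k s * (\<Prod>j\<in>I. \<Sum>a\<in>A. g s j a) = q k s * (mu k * mu m * (if s = t then P n m else mu n))"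
        by simp
    qed
    also have "\<dots> = mu k * mu m * (\<Sum>s\<in>{1..T}. q k s * (if s = t then P n m else mu n))"
      by (simp add: sum_distrib_left mult.assoc mult.left_commute)
    also have "(\<Sum>s\<in>{1..T}. q k s * (if s = t then P n m else mu n)) = q k t * P n m + (1 - q k t) * mu n"
    proof -
      have "(\<Sum>s\<in>{1..T}. q k s * (if s = t then P n m else mu n))
          = q k t * P n m + (\<Sum>s\<in>{1..T}-{t}. q k s * (if s = t then P n m else mu n))"
        using t by (simp add: sum.remove)
      also have "(\<Sum>s\<in>{1..T}-{t}. q k s * (if s = t then P n m else mu n)) = (\<Sum>s\<in>{1..T}-{t}. q k s) * mu n"
        by (simp add: sum_distrib_right)
      also have "(\<Sum>s\<in>{1..T}-{t}. q k s) = 1 - q k t"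
        using q_sum[OF k] t by (simp add: sum_diff1)
      finally show ?thesis .
    qed
    finally show ?thesis .
  qed
  show ?thesis unfolding cond_prob_def den num using mu_k_pos
    by (simp add: field_simps)
qed

end
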